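(* Let $\alpha,\beta,\gamma,\eta>0$ and $\rho\in(0,1)$ with $\gamma\geq\alpha$, and consider the system $$S'=-\beta IS+\gamma(1-S-I-R)+\eta R,\qquad I'=\rho\beta IS-\alpha I+\beta I(1-S-I-R),\qquad R'=\alpha I-\eta R.$$ (a) The system has a unique disease-free equilibrium (an equilibrium with $I=0$), namely $\mathcal{E}_0=(S,I,R)=(1,0,0)$, and it exists for every such choice of parameters. (b) Let $\mathcal{R}_0:=\frac{\rho\beta}{\alpha}$. Then $\mathcal{E}_0$ is locally asymptotically stable if $\mathcal{R}_0<1$ and unstable if $\mathcal{R}_0>1$.
   Context: This is the reduced form (using $W=1-S-I-R$) of a four-compartment model $S,W,I,R$ with total population normalized to $1$, in which the transmission rates from $S$ and from $W$ are taken equal to $\beta$. The state $(S,I,R)$ corresponds to nonnegative compartments with $S+I+R\le 1$. *)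

theory Defs
  imports "HOL-Analysis.Analysis"
begin

definition swir_field :: "real \<Rightarrow> real \<Rightarrow> real \<Rightarrow> real \<Rightarrow> real \<Rightarrow> real \<times> real \<times> real \<Rightarrow> real \<times> real \<times> real" where
  "swir_field \<alpha> \<beta> \<gamma> \<eta> \<rho> = (\<lambda>(S, I, R).
     (- \<beta> * I * S + \<gamma> * (1 - S - I - R) + \<eta> * R,
      \<rho> * \<beta> * I * S - \<alpha> * I + \<beta> * I * (1 - S - I - R),
      \<alpha> * I - \<eta> * R))"

definition ode_solution :: "('a::real_normed_vector \<Rightarrow> 'a) \<Rightarrow> (real \<Rightarrow> 'a) \<Rightarrow> real set \<Rightarrow> bool" where
  "ode_solution F x T \<longleftrightarrow> (\<forall>t\<in>T. (x has_vector_derivative F (x t)) (at t within T))"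

definition equilibrium :: "('a::real_normed_vector \<Rightarrow> 'a) \<Rightarrow> 'a \<Rightarrow> bool" where
  "equilibrium F p \<longleftrightarrow> F p = 0"

definition lyapunov_stable :: "('a::real_normed_vector \<Rightarrow> 'a) \<Rightarrow> 'a \<Rightarrow> bool" where
  "lyapunov_stable F p \<longleftrightarrow>
     (\<forall>\<epsilon>>0. \<exists>\<delta>>0. \<forall>x b. ode_solution F x {0..b} \<and> dist (x 0) p < \<delta>
        \<longrightarrow> (\<forall>t\<in>{0..b}. dist (x t) p < \<epsilon>))"

definition locally_asymptotically_stable :: "('a::real_normed_vector \<Rightarrow> 'a) \<Rightarrow> 'a \<Rightarrow> bool" where
  "locally_asymptotically_stable F p \<longleftrightarrow> equilibrium F p \<and> lyapunov_stable F p \<and>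
     (\<exists>\<delta>>0. \<forall>x. ode_solution F x {0..} \<and> dist (x 0) p < \<delta> \<longrightarrow> (x \<longlongrightarrow> p) at_top)"

definition unstable_equilibrium :: "('a::real_normed_vector \<Rightarrow> 'a) \<Rightarrow> 'a \<Rightarrow> bool" where
  "unstable_equilibrium F p \<longleftrightarrow> equilibrium F p \<and> \<not> lyapunov_stable F p"

end

theory Submission
  imports Defs "HOL-Real_Asymp.Real_Asymp"
begin

lemma exp_integral:
  fixes K u :: real
  assumes "K > 0" "u \<ge> 0"
  shows "((\<lambda>s. exp (K * s)) has_integral (exp (K * u) - 1)/K) {0..u}"
proof -
  have "((\<lambda>s. exp (K * s)) has_integral ((\<lambda>s. exp (K * s)/K) u - (\<lambda>s. exp (K * s)/K) 0)) {0..u}"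
  proof (rule fundamental_theorem_of_calculus)
    show "0 \<le> u" using assms by simp
    fix x assume "x \<in> {0..u}"
    have "((\<lambda>s. exp (K * s)/K) has_real_derivative exp (K * x)) (at x within {0..u})"
      using assms by (auto intro!: derivative_eq_intros)
    then show "((\<lambda>s. exp (K * s)/K) has_vector_derivative exp (K * x)) (at x within {0..u})"
      by (simp add: has_real_derivative_iff_has_vector_derivative)
  qed
  then show ?thesis by (simp add: diff_divide_distrib)
qed

lemma ode_exists:
  fixes G :: "'a::banach \<Rightarrow> 'a"
  assumes lip: "\<And>x y. dist (G x) (G y) \<le> L * dist x y" and L0: "L \<ge> 0" and T0: "T \<ge> 0"
  shows "\<exists>y. y 0 = y0 \<and> (\<forall>t\<in>{0..T}. (y has_vector_derivative G (y t)) (at t within {0..T}))"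
proof -
  define K where "K = 2 * L + 1"
  have K0: "K > 0" using L0 by (simp add: K_def)
  define cl where "cl t = max 0 (min T t)" for t :: real
  have contG: "continuous_on UNIV G"
  proof -
    have "L-lipschitz_on UNIV G" using lip L0 by (auto intro: lipschitz_onI)
    then show ?thesis by (rule lipschitz_on_continuous_on)
  qed
  define h where "h w t = G (exp (K * t) *\<^sub>R apply_bcontfun w t)" for w :: "real \<Rightarrow>\<^sub>C 'a" and t
  have hcont: "continuous_on A (h w)" for w A
    unfolding h_def
    by (intro continuous_on_compose2[OF contG] continuous_intros) auto
  define g where "g w u = exp (- K * u) *\<^sub>R (y0 + integral {0..u} (h w))" for w u
  have gcont: "continuous_on {0..T} (g w)" for w
    unfolding g_def
    by (intro continuous_intros indefinite_integral_continuous_1 integrable_continuous_real hcont)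
  have clcont: "continuous_on UNIV cl" unfolding cl_def by (intro continuous_intros)
  have clrange: "cl t \<in> {0..T}" for t using T0 by (auto simp: cl_def)
  have inb: "(\<lambda>t. g w (cl t)) \<in> bcontfun" for w
    unfolding bcontfun_def
  proof safe
    show "continuous_on UNIV (\<lambda>t. g w (cl t))"
      by (rule continuous_on_compose2[OF gcont clcont]) (use clrange in auto)
    have "range (\<lambda>t. g w (cl t)) \<subseteq> g w ` {0..T}" using clrange by auto
    moreover have "bounded (g w ` {0..T})"
      by (intro compact_imp_bounded compact_continuous_image gcont) auto
    ultimately show "bounded (range (\<lambda>t. g w (cl t)))" by (rule bounded_subset[rotated])
  qed
  define P where "P w = Bcontfun (\<lambda>t. g w (cl t))" for w
  have Papp: "apply_bcontfun (P w) t = g w (cl t)" for w t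
    unfolding P_def using Bcontfun_inverse[OF inb] by simp
  have contr: "dist (P w) (P v) \<le> 1/2 * dist w v" for w v
  proof (rule dist_bound)
    fix t
    define u where "u = cl t"
    have u0: "0 \<le> u" "u \<le> T" using clrange by (auto simp: u_def)
    define D where "D = dist w v"
    have D0: "D \<ge> 0" by (simp add: D_def)
    have intw: "h w integrable_on {0..u}" "h v integrable_on {0..u}"
      by (intro integrable_continuous_real hcont)+
    have bnd: "norm (h w s - h v s) \<le> L * D * exp (K * s)" for s
    proof -
      have "norm (h w s - h v s) \<le> L * dist (exp (K * s) *\<^sub>R apply_bcontfun w s) (exp (K * s) *\<^sub>R apply_bcontfun v s)"
        unfolding h_def using lip by (simp add: dist_norm)
      also have "\<dots> = L * (exp (K * s) * dist (apply_bcontfun w s) (apply_bcontfun v s))"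
        by (simp add: dist_norm scaleR_diff_right[symmetric])
      also have "\<dots> \<le> L * (exp (K * s) * D)"
        unfolding D_def using L0 by (intro mult_left_mono dist_bounded) auto
      finally show ?thesis by (simp add: algebra_simps)
    qed
    have eint: "((\<lambda>s. L * D * exp (K * s)) has_integral L * D * ((exp (K * u) - 1)/K)) {0..u}"
      by (intro has_integral_mult_right exp_integral K0 u0)
    have "dist (apply_bcontfun (P w) t) (apply_bcontfun (P v) t) = exp (- K * u) * norm (integral {0..u} (h w) - integral {0..u} (h v))"
      unfolding Papp u_def[symmetric] g_def dist_norm
      by (simp add: scaleR_diff_right[symmetric])
    also have "integral {0..u} (h w) - integral {0..u} (h v) = integral {0..u} (\<lambda>s. h w s - h v s)"
      using intw by (simp add: integral_diff)
    also have "norm (integral {0..u} (\<lambda>s. h w s - h v s)) \<le> integral {0..u} (\<lambda>s. L * D * exp (K * s))"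
      by (rule integral_norm_bound_integral) (use intw eint bnd in \<open>auto intro: integrable_diff\<close>)
    also have "integral {0..u} (\<lambda>s. L * D * exp (K * s)) = L * D * ((exp (K * u) - 1)/K)"
      using eint by (rule integral_unique)
    finally have "dist (apply_bcontfun (P w) t) (apply_bcontfun (P v) t) \<le> exp (- K * u) * (L * D * ((exp (K * u) - 1)/K))"
      by (simp add: mult_left_mono)
    also have "\<dots> = L * D * (1 - exp (- K * u)) / K"
      by (simp add: field_simps exp_minus)
    also have "\<dots> \<le> L * D / K"
    proof -
      have "L * D * (1 - exp (- K * u)) \<le> L * D * 1"
        using L0 D0 by (intro mult_left_mono) auto
      then show ?thesis using K0 by (intro divide_right_mono) auto
    qed
    also have "\<dots> \<le> 1/2 * D"
      using L0 D0 K0 by (simp add: K_def field_simps mult_right_mono)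
    finally show "dist (apply_bcontfun (P w) t) (apply_bcontfun (P v) t) \<le> 1/2 * dist w v"
      by (simp add: D_def)
  qed
  obtain w where wfix: "P w = w"
    using banach_fix_type[of "1/2" P] contr by auto
  define y where "y t = exp (K * t) *\<^sub>R apply_bcontfun w t" for t
  have yeq: "y t = y0 + integral {0..t} (\<lambda>s. G (y s))" if "t \<in> {0..T}" for t
  proof -
    have "apply_bcontfun w t = g w t"
      using Papp[of w t] wfix that by (simp add: cl_def)
    then have "y t = exp (K * t) *\<^sub>R g w t" by (simp add: y_def)
    also have "\<dots> = y0 + integral {0..t} (h w)"
      by (simp add: g_def exp_minus)
    also have "h w = (\<lambda>s. G (y s))" by (simp add: h_def y_def fun_eq_iff)
    finally show ?thesis .
  qed
  have ycont: "continuous_on {0..T} (\<lambda>s. G (y s))"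
    unfolding y_def by (intro continuous_on_compose2[OF contG] continuous_intros) auto
  show ?thesis
  proof (intro exI conjI ballI)
    show "y 0 = y0" using yeq[of 0] T0 by simp
    fix t assume t: "t \<in> {0..T}"
    have D: "((\<lambda>u. y0 + integral {0..u} (\<lambda>s. G (y s))) has_vector_derivative G (y t)) (at t within {0..T})"
      using integral_has_vector_derivative[OF ycont t]
      by (auto intro!: derivative_eq_intros)
    show "(y has_vector_derivative G (y t)) (at t within {0..T})"
      by (rule has_vector_derivative_transform[OF t yeq D])
  qed
qed

definition clp :: "real \<Rightarrow> real" where "clp u = max (-2) (min 2 u)"

definition clampF :: "real \<Rightarrow> real \<Rightarrow> real \<Rightarrow> real \<Rightarrow> real \<Rightarrow> real \<times> real \<times> real \<Rightarrow> real \<times> real \<times> real" where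
  "clampF \<alpha> \<beta> \<gamma> \<eta> \<rho> = (\<lambda>(S, I, R). swir_field \<alpha> \<beta> \<gamma> \<eta> \<rho> (clp S, clp I, clp R))"

lemma clp_bound: "\<bar>clp u\<bar> \<le> 2" by (simp add: clp_def)
lemma clp_lip: "\<bar>clp u - clp v\<bar> \<le> \<bar>u - v\<bar>" by (simp add: clp_def)

lemma prod_diff:
  fixes x y x' y' M :: real
  assumes "\<bar>x\<bar> \<le> M" "\<bar>y'\<bar> \<le> M"
  shows "\<bar>x * y - x' * y'\<bar> \<le> M * \<bar>y - y'\<bar> + M * \<bar>x - x'\<bar>"
proof -
  have "x * y - x' * y' = x * (y - y') + y' * (x - x')" by (simp add: algebra_simps)
  then have "\<bar>x * y - x' * y'\<bar> \<le> \<bar>x\<bar> * \<bar>y - y'\<bar> + \<bar>y'\<bar> * \<bar>x - x'\<bar>"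
    by (metis abs_mult abs_triangle_ineq)
  also have "\<dots> \<le> M * \<bar>y - y'\<bar> + M * \<bar>x - x'\<bar>"
    using assms by (intro add_mono mult_right_mono) auto
  finally show ?thesis .
qed

lemma absmul_le: "(c::real) > 0 \<Longrightarrow> \<bar>x\<bar> \<le> D \<Longrightarrow> \<bar>c * x\<bar> \<le> c * D"
  by (simp add: abs_mult mult_left_mono)

lemma dist3_le: "dist (a1::real, a2::real, a3::real) (b1, b2, b3) \<le> \<bar>a1 - b1\<bar> + \<bar>a2 - b2\<bar> + \<bar>a3 - b3\<bar>"
proof -
  have "dist (a1, a2, a3) (b1, b2, b3) = norm (a1 - b1, a2 - b2, a3 - b3)" by (simp add: dist_norm)
  also have "\<dots> \<le> norm (a1 - b1) + norm (a2 - b2, a3 - b3)" by (rule norm_Pair_le)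
  also have "norm (a2 - b2, a3 - b3) \<le> norm (a2 - b2) + norm (a3 - b3)" by (rule norm_Pair_le)
  finally show ?thesis by simp
qed

lemma comp_le_dist3:
  fixes xa xb xc ya yb yc :: real
  shows "\<bar>xa - ya\<bar> \<le> dist (xa, xb, xc) (ya, yb, yc)"
    and "\<bar>xb - yb\<bar> \<le> dist (xa, xb, xc) (ya, yb, yc)"
    and "\<bar>xc - yc\<bar> \<le> dist (xa, xb, xc) (ya, yb, yc)"
proof -
  show "\<bar>xa - ya\<bar> \<le> dist (xa, xb, xc) (ya, yb, yc)"
    using dist_fst_le[of "(xa, xb, xc)" "(ya, yb, yc)"] by (simp add: dist_real_def)
  have "dist (xb, xc) (yb, yc) \<le> dist (xa, xb, xc) (ya, yb, yc)"
    using dist_snd_le[of "(xa, xb, xc)" "(ya, yb, yc)"] by simp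
  then show "\<bar>xb - yb\<bar> \<le> dist (xa, xb, xc) (ya, yb, yc)"
    "\<bar>xc - yc\<bar> \<le> dist (xa, xb, xc) (ya, yb, yc)"
    using dist_fst_le[of "(xb, xc)" "(yb, yc)"] dist_snd_le[of "(xb, xc)" "(yb, yc)"]
    by (auto simp: dist_real_def)
qed

lemma field_lip_box:
  fixes s i r s' i' r' \<alpha> \<beta> \<gamma> \<eta> \<rho> :: real
  assumes b: "\<bar>s\<bar> \<le> 2" "\<bar>i\<bar> \<le> 2" "\<bar>r\<bar> \<le> 2" "\<bar>s'\<bar> \<le> 2" "\<bar>i'\<bar> \<le> 2" "\<bar>r'\<bar> \<le> 2"
    and p: "\<alpha> > 0" "\<beta> > 0" "\<gamma> > 0" "\<eta> > 0" "0 \<le> \<rho>" "\<rho> \<le> 1"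
  shows "dist (swir_field \<alpha> \<beta> \<gamma> \<eta> \<rho> (s, i, r)) (swir_field \<alpha> \<beta> \<gamma> \<eta> \<rho> (s', i', r'))
         \<le> 18 * (\<alpha> + \<beta> + \<gamma> + \<eta>) * (\<bar>s - s'\<bar> + \<bar>i - i'\<bar> + \<bar>r - r'\<bar>)"
proof -
  define D where "D = \<bar>s - s'\<bar> + \<bar>i - i'\<bar> + \<bar>r - r'\<bar>"
  have D0: "D \<ge> 0" by (simp add: D_def)
  have P1: "\<bar>i * s - i' * s'\<bar> \<le> 2 * D"
    by (rule order_trans[OF prod_diff[of i 2 s' s i', OF b(2) b(4)]]) (simp add: D_def)
  have P2: "\<bar>i * (1 - s - i - r) - i' * (1 - s' - i' - r')\<bar> \<le> 14 * D"
  proof -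
    have "\<bar>i * (1 - s - i - r) - i' * (1 - s' - i' - r')\<bar> \<le> 7 * \<bar>(1 - s - i - r) - (1 - s' - i' - r')\<bar> + 7 * \<bar>i - i'\<bar>"
      using b by (intro prod_diff) auto
    moreover have "\<bar>(1 - s - i - r) - (1 - s' - i' - r')\<bar> \<le> D" unfolding D_def by linarith
    moreover have "\<bar>i - i'\<bar> \<le> D" unfolding D_def by linarith
    ultimately show ?thesis by (smt (verit))
  qed
  have e1: "\<bar>(- \<beta> * i * s + \<gamma> * (1 - s - i - r) + \<eta> * r) - (- \<beta> * i' * s' + \<gamma> * (1 - s' - i' - r') + \<eta> * r')\<bar>
     \<le> (2 * \<beta> + \<gamma> + \<eta>) * D"
  proof -
    have eq: "(- \<beta> * i * s + \<gamma> * (1 - s - i - r) + \<eta> * r) - (- \<beta> * i' * s' + \<gamma> * (1 - s' - i' - r') + \<eta> * r')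
       = - \<beta> * (i * s - i' * s') - \<gamma> * ((s - s') + (i - i') + (r - r')) + \<eta> * (r - r')"
      by (simp add: algebra_simps)
    have "\<bar>\<beta> * (i * s - i' * s')\<bar> \<le> \<beta> * (2 * D)" using P1 p by (simp add: abs_mult mult_left_mono)
    moreover have "\<bar>\<gamma> * ((s - s') + (i - i') + (r - r'))\<bar> \<le> \<gamma> * D"
      using p by (intro absmul_le) (auto simp: D_def)
    moreover have "\<bar>\<eta> * (r - r')\<bar> \<le> \<eta> * D"
      using p by (intro absmul_le) (auto simp: D_def)
    ultimately show ?thesis unfolding eq by (simp add: algebra_simps)
  qed
  have e2: "\<bar>(\<rho> * \<beta> * i * s - \<alpha> * i + \<beta> * i * (1 - s - i - r)) - (\<rho> * \<beta> * i' * s' - \<alpha> * i' + \<beta> * i' * (1 - s' - i' - r'))\<bar>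
     \<le> (16 * \<beta> + \<alpha>) * D"
  proof -
    have eq: "(\<rho> * \<beta> * i * s - \<alpha> * i + \<beta> * i * (1 - s - i - r)) - (\<rho> * \<beta> * i' * s' - \<alpha> * i' + \<beta> * i' * (1 - s' - i' - r'))
      = (\<rho> * \<beta>) * (i * s - i' * s') - \<alpha> * (i - i') + \<beta> * (i * (1 - s - i - r) - i' * (1 - s' - i' - r'))"
      by (simp add: algebra_simps)
    have rb: "\<rho> * \<beta> \<le> \<beta>" using p by (simp add: mult_left_le_one_le)
    have "\<bar>(\<rho> * \<beta>) * (i * s - i' * s')\<bar> \<le> (\<rho> * \<beta>) * (2 * D)" using P1 p by (simp add: abs_mult mult_left_mono)
    also have "\<dots> \<le> \<beta> * (2 * D)" using rb D0 by (intro mult_right_mono) auto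
    finally have A: "\<bar>(\<rho> * \<beta>) * (i * s - i' * s')\<bar> \<le> \<beta> * (2 * D)" .
    have B: "\<bar>\<alpha> * (i - i')\<bar> \<le> \<alpha> * D"
      using p by (intro absmul_le) (auto simp: D_def)
    have C: "\<bar>\<beta> * (i * (1 - s - i - r) - i' * (1 - s' - i' - r'))\<bar> \<le> \<beta> * (14 * D)"
      using P2 p by (simp add: abs_mult mult_left_mono)
    from A B C show ?thesis unfolding eq by (simp add: algebra_simps)
  qed
  have e3: "\<bar>(\<alpha> * i - \<eta> * r) - (\<alpha> * i' - \<eta> * r')\<bar> \<le> (\<alpha> + \<eta>) * D"
  proof -
    have "\<bar>\<alpha> * (i - i')\<bar> \<le> \<alpha> * D" "\<bar>\<eta> * (r - r')\<bar> \<le> \<eta> * D"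
      using p by (intro absmul_le; auto simp: D_def)+
    then show ?thesis by (simp add: algebra_simps)
  qed
  have "dist (swir_field \<alpha> \<beta> \<gamma> \<eta> \<rho> (s, i, r)) (swir_field \<alpha> \<beta> \<gamma> \<eta> \<rho> (s', i', r'))
      \<le> (2 * \<beta> + \<gamma> + \<eta>) * D + (16 * \<beta> + \<alpha>) * D + (\<alpha> + \<eta>) * D"
    unfolding swir_field_def using dist3_le e1 e2 e3 by simp (smt (verit))
  also have "\<dots> \<le> 18 * (\<alpha> + \<beta> + \<gamma> + \<eta>) * D"
    using p D0 by (simp add: algebra_simps)
  finally show ?thesis by (simp add: D_def)
qed

lemma clampF_lip:
  assumes p: "\<alpha> > 0" "\<beta> > 0" "\<gamma> > 0" "\<eta> > 0" "0 \<le> \<rho>" "\<rho> \<le> 1"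
  shows "dist (clampF \<alpha> \<beta> \<gamma> \<eta> \<rho> x) (clampF \<alpha> \<beta> \<gamma> \<eta> \<rho> y) \<le> (54 * (\<alpha> + \<beta> + \<gamma> + \<eta>)) * dist x y"
proof -
  obtain s i r where x: "x = (s, i, r)" by (cases x) auto
  obtain s' i' r' where y: "y = (s', i', r')" by (cases y) auto
  have "dist (clampF \<alpha> \<beta> \<gamma> \<eta> \<rho> x) (clampF \<alpha> \<beta> \<gamma> \<eta> \<rho> y)
     \<le> 18 * (\<alpha> + \<beta> + \<gamma> + \<eta>) * (\<bar>clp s - clp s'\<bar> + \<bar>clp i - clp i'\<bar> + \<bar>clp r - clp r'\<bar>)"
    unfolding x y clampF_def prod.case using p by (intro field_lip_box clp_bound) auto
  also have "\<dots> \<le> 18 * (\<alpha> + \<beta> + \<gamma> + \<eta>) * (3 * dist x y)"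
  proof (rule mult_left_mono)
    show "\<bar>clp s - clp s'\<bar> + \<bar>clp i - clp i'\<bar> + \<bar>clp r - clp r'\<bar> \<le> 3 * dist x y"
      using comp_le_dist3[where xa=s and xb=i and xc=r and ya=s' and yb=i' and yc=r'] clp_lip[of s s'] clp_lip[of i i'] clp_lip[of r r']
      unfolding x y by linarith
  qed (use p in auto)
  finally show ?thesis by (simp add: algebra_simps)
qed

lemma young: fixes x y k :: real assumes "k > 0" shows "x * y \<le> k * x^2 + y^2 / (4 * k)"
proof -
  have "0 \<le> (2 * k * x - y)^2 / (4 * k)" using assms by simp
  also have "(2 * k * x - y)^2 / (4 * k) = k * x^2 + y^2 / (4 * k) - x * y"
    using assms by (simp add: field_simps power2_eq_square)
  finally show ?thesis by simp
qed

lemma key_ineq: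
  fixes a i r \<alpha> \<beta> \<gamma> \<eta> \<rho> A B c0 \<delta>0 \<mu> :: real
  assumes p: "\<alpha> > 0" "\<beta> > 0" "\<gamma> > 0" "\<eta> > 0" "0 < \<rho>" "\<rho> < 1"
    and mu: "\<mu> = \<alpha> - \<rho> * \<beta>" "\<mu> > 0"
    and A: "A = 4 * (\<eta> - \<gamma>)^2 / (\<gamma> * \<eta>) + 1"
    and B: "B = 2 * ((\<beta> + \<gamma>)^2 / \<gamma> + A * \<alpha>^2 / \<eta>) / \<mu> + 1"
    and c0: "c0 = min (min \<gamma> \<eta>) \<mu> / 2"
    and d0: "\<delta>0 = c0 / (6 * \<beta>)"
    and bnd: "\<bar>a\<bar> \<le> \<delta>0" "\<bar>i\<bar> \<le> \<delta>0" "\<bar>r\<bar> \<le> \<delta>0"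
  shows "2 * a * (- \<beta> * i * (1 + a) + \<gamma> * (1 - (1 + a) - i - r) + \<eta> * r)
       + 2 * A * r * (\<alpha> * i - \<eta> * r)
       + 2 * B * i * (\<rho> * \<beta> * i * (1 + a) - \<alpha> * i + \<beta> * i * (1 - (1 + a) - i - r))
       \<le> - c0 * (a^2 + A * r^2 + B * i^2)"
proof -
  define X where "X = (\<beta> + \<gamma>)^2 / \<gamma> + A * \<alpha>^2 / \<eta>"
  have A1: "A \<ge> 1" using A p by simp
  have X0: "X \<ge> 0" using A1 p by (simp add: X_def)
  have BX': "B = 2 * X / \<mu> + 1" using B by (simp add: X_def)
  have BX: "B * \<mu> = 2 * X + \<mu>" using BX' mu(2) by (simp add: field_simps)
  have B1: "B \<ge> 1" using B mu X0 by (simp add: X_def[symmetric])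
  have c0pos: "c0 > 0" and c0g: "c0 \<le> \<gamma> / 2" and c0e: "c0 \<le> \<eta> / 2" and c0m: "c0 \<le> \<mu> / 2"
    using c0 p mu by auto
  have bd: "\<beta> * \<delta>0 = c0 / 6" using d0 p by simp
  have Aeta: "(\<eta> - \<gamma>)^2 / \<gamma> = A * \<eta> / 4 - \<eta> / 4"
    using A p by (simp add: field_simps)
  have iden: "a * (- \<beta> * i * (1 + a) + \<gamma> * (1 - (1 + a) - i - r) + \<eta> * r)
       + A * r * (\<alpha> * i - \<eta> * r)
       + B * i * (\<rho> * \<beta> * i * (1 + a) - \<alpha> * i + \<beta> * i * (1 - (1 + a) - i - r))
     = (- \<gamma> * a^2 - A * \<eta> * r^2 - B * \<mu> * i^2 + - (a * ((\<beta> + \<gamma>) * i)) + (\<eta> - \<gamma>) * a * r + r * (A * \<alpha> * i))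
       + (\<beta> * a^2 * (- i) + B * i^2 * ((\<rho> - 1) * \<beta> * a - \<beta> * i - \<beta> * r))"
    unfolding mu(1) by (simp add: algebra_simps power2_eq_square)
  have y1: "- (a * ((\<beta> + \<gamma>) * i)) \<le> \<gamma>/4 * a^2 + (\<beta> + \<gamma>)^2 / \<gamma> * i^2"
    using young[of "\<gamma>/4" "- a" "(\<beta> + \<gamma>) * i"] p by (simp add: power_mult_distrib)
  have y2: "(\<eta> - \<gamma>) * a * r \<le> \<gamma>/4 * a^2 + (\<eta> - \<gamma>)^2 / \<gamma> * r^2"
    using young[of "\<gamma>/4" a "(\<eta> - \<gamma>) * r"] p by (simp add: power_mult_distrib mult.commute mult.left_commute)
  have y3: "r * (A * \<alpha> * i) \<le> A * \<eta> / 4 * r^2 + A * \<alpha>^2 / \<eta> * i^2"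
  proof -
    have "r * (A * \<alpha> * i) \<le> A * \<eta> / 4 * r^2 + (A * \<alpha> * i)^2 / (4 * (A * \<eta> / 4))"
      using young[of "A * \<eta> / 4" r "A * \<alpha> * i"] p A1 by simp
    also have "(A * \<alpha> * i)^2 / (4 * (A * \<eta> / 4)) = A * \<alpha>^2 / \<eta> * i^2"
      using p A1 by (simp add: field_simps power2_eq_square)
    finally show ?thesis .
  qed
  have cub1: "\<beta> * a^2 * (- i) \<le> c0 / 6 * a^2"
  proof -
    have "\<beta> * a^2 * (- i) \<le> \<beta> * a^2 * \<delta>0"
      using bnd p by (intro mult_left_mono) auto
    also have "\<beta> * a^2 * \<delta>0 = (\<beta> * \<delta>0) * a^2" by (simp add: mult_ac)
    also have "\<dots> = c0 / 6 * a^2" using bd by simp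
    finally show ?thesis .
  qed
  have cub2: "B * i^2 * ((\<rho> - 1) * \<beta> * a - \<beta> * i - \<beta> * r) \<le> B * c0 / 2 * i^2"
  proof -
    have "(\<rho> - 1) * a \<le> \<delta>0"
    proof -
      have "\<bar>(\<rho> - 1) * a\<bar> \<le> 1 * \<bar>a\<bar>" unfolding abs_mult using p by (intro mult_right_mono) auto
      then show ?thesis using bnd by linarith
    qed
    then have "(\<rho> - 1) * \<beta> * a - \<beta> * i - \<beta> * r \<le> \<beta> * \<delta>0 + \<beta> * \<delta>0 + \<beta> * \<delta>0"
    proof -
      have "\<beta> * ((\<rho> - 1) * a) \<le> \<beta> * \<delta>0" using p \<open>(\<rho> - 1) * a \<le> \<delta>0\<close> by (intro mult_left_mono) auto
      moreover have "\<beta> * (- i) \<le> \<beta> * \<delta>0" using p bnd by (intro mult_left_mono) auto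
      moreover have "\<beta> * (- r) \<le> \<beta> * \<delta>0" using p bnd by (intro mult_left_mono) auto
      ultimately show ?thesis by (simp add: algebra_simps)
    qed
    also have "\<dots> = c0 / 2" using bd by simp
    finally have "(\<rho> - 1) * \<beta> * a - \<beta> * i - \<beta> * r \<le> c0 / 2" .
    then have "B * i^2 * ((\<rho> - 1) * \<beta> * a - \<beta> * i - \<beta> * r) \<le> B * i^2 * (c0 / 2)"
      using B1 by (intro mult_left_mono) auto
    then show ?thesis by (simp add: algebra_simps)
  qed
  define k1 where "k1 = - \<gamma> / 2 + 2 * c0 / 3"
  define k2 where "k2 = - A * \<eta> / 2 - \<eta> / 4 + c0 * A / 2"
  define k3 where "k3 = - X - \<mu> + B * c0"
  have k1: "k1 \<le> 0" using c0g p by (simp add: k1_def)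
  have k2: "k2 \<le> 0"
  proof -
    have "c0 * A \<le> \<eta> / 2 * A" using c0e A1 by (intro mult_right_mono) auto
    then have h1: "c0 * A / 2 \<le> A * \<eta> / 4" by (simp add: mult_ac)
    have h2: "0 \<le> A * \<eta> / 2" using p A1 by simp
    show ?thesis unfolding k2_def using h1 h2 p by linarith
  qed
  have k3: "k3 \<le> 0"
  proof -
    have "B * c0 \<le> B * (\<mu> / 2)" using c0m B1 by (intro mult_left_mono) auto
    then show ?thesis using BX mu by (simp add: k3_def algebra_simps)
  qed
  have "a * (- \<beta> * i * (1 + a) + \<gamma> * (1 - (1 + a) - i - r) + \<eta> * r)
       + A * r * (\<alpha> * i - \<eta> * r)
       + B * i * (\<rho> * \<beta> * i * (1 + a) - \<alpha> * i + \<beta> * i * (1 - (1 + a) - i - r))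
     \<le> (- \<gamma> * a^2 - A * \<eta> * r^2 - B * \<mu> * i^2 + (\<gamma>/4 * a^2 + (\<beta> + \<gamma>)^2 / \<gamma> * i^2)
        + (\<gamma>/4 * a^2 + (\<eta> - \<gamma>)^2 / \<gamma> * r^2) + (A * \<eta> / 4 * r^2 + A * \<alpha>^2 / \<eta> * i^2))
       + (c0 / 6 * a^2 + B * c0 / 2 * i^2)"
    unfolding iden using y1 y2 y3 cub1 cub2 by linarith
  also have "\<dots> = k1 * a^2 + k2 * r^2 + k3 * i^2 - c0 / 2 * (a^2 + A * r^2 + B * i^2)"
    unfolding k1_def k2_def k3_def Aeta X_def using BX
    by (simp add: algebra_simps X_def)
  also have "\<dots> \<le> - c0 / 2 * (a^2 + A * r^2 + B * i^2)"
    using k1 k2 k3 by (simp add: mult_nonpos_nonneg add_nonpos_nonpos)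
  finally show ?thesis by (simp add: algebra_simps)
qed

lemma deriv_nonpos_le:
  fixes \<phi> \<phi>' :: "real \<Rightarrow> real"
  assumes der: "\<And>t. t \<in> {0..b} \<Longrightarrow> (\<phi> has_real_derivative \<phi>' t) (at t within {0..b})"
    and np: "\<And>t. t \<in> {0..b} \<Longrightarrow> \<phi>' t \<le> 0"
    and t: "t \<in> {0..b}"
  shows "\<phi> t \<le> \<phi> 0"
proof -
  have "\<exists>x\<in>{0..t}. \<phi> t - \<phi> 0 = ((*) (\<phi>' x)) (t - 0)"
  proof (rule mvt_very_simple)
    show "0 \<le> t" using t by simp
    fix x assume "0 \<le> x" "x \<le> t"
    then have "(\<phi> has_real_derivative \<phi>' x) (at x within {0..t})"
      using der[of x] t by (auto intro: DERIV_subset)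
    then show "(\<phi> has_derivative ((*) (\<phi>' x))) (at x within {0..t})"
      by (simp add: has_field_derivative_def)
  qed
  then obtain x where x: "x \<in> {0..t}" "\<phi> t - \<phi> 0 = \<phi>' x * t" by auto
  have "\<phi>' x * t \<le> 0" using np[of x] x t by (auto intro: mult_nonpos_nonneg)
  then show ?thesis using x by simp
qed

lemma barrier:
  fixes \<phi> \<phi>' :: "real \<Rightarrow> real"
  assumes der: "\<And>t. t \<in> {0..b} \<Longrightarrow> (\<phi> has_real_derivative \<phi>' t) (at t within {0..b})"
    and np: "\<And>t. t \<in> {0..b} \<Longrightarrow> \<phi> t < L \<Longrightarrow> \<phi>' t \<le> 0"
    and init: "\<phi> 0 < L"
    and t0: "t0 \<in> {0..b}"
  shows "\<phi> t0 < L"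
proof (rule ccontr)
  assume "\<not> \<phi> t0 < L"
  then have t0L: "\<phi> t0 \<ge> L" by simp
  have cont: "continuous_on {0..b} \<phi>"
    using der by (intro DERIV_continuous_on) auto
  define C where "C = {0..t0} \<inter> \<phi> -` {L..}"
  have "closed C" unfolding C_def
    by (rule continuous_closed_preimage) (use cont t0 in \<open>auto intro: continuous_on_subset\<close>)
  have "t0 \<in> C" using t0 t0L by (auto simp: C_def)
  have bdd: "bdd_below C" by (auto simp: C_def bdd_below_def)
  define a where "a = Inf C"
  have aC: "a \<in> C" unfolding a_def
    using closed_contains_Inf[OF _ bdd \<open>closed C\<close>] \<open>t0 \<in> C\<close> by auto
  then have a: "0 \<le> a" "a \<le> t0" "\<phi> a \<ge> L" by (auto simp: C_def)
  have before: "\<phi> s < L" if "0 \<le> s" "s < a" for s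
  proof (rule ccontr)
    assume "\<not> \<phi> s < L"
    then have "s \<in> C" using that a by (auto simp: C_def)
    then have "a \<le> s" unfolding a_def using bdd by (rule cInf_lower)
    then show False using that by simp
  qed
  have apos: "0 < a" using a init by (cases "a = 0") auto
  have "\<exists>x\<in>{0<..<a}. \<phi> a - \<phi> 0 = ((*) (\<phi>' x)) (a - 0)"
  proof (rule mvt_simple)
    show "0 < a" by (rule apos)
    fix x assume "0 \<le> x" "x \<le> a"
    then have "(\<phi> has_real_derivative \<phi>' x) (at x within {0..a})"
      using der[of x] a t0 by (auto intro: DERIV_subset)
    then show "(\<phi> has_derivative ((*) (\<phi>' x))) (at x within {0..a})"
      by (simp add: has_field_derivative_def)
  qed
  then obtain x where x: "0 < x" "x < a" "\<phi> a - \<phi> 0 = \<phi>' x * a" by auto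
  have "\<phi>' x \<le> 0" using np[of x] before[of x] x a t0 by auto
  then have "\<phi>' x * a \<le> 0" using apos by (simp add: mult_nonpos_nonneg)
  then show False using x a init by linarith
qed

lemma comp_derivs:
  fixes x :: "real \<Rightarrow> real \<times> real \<times> real"
  assumes "(x has_vector_derivative v) (at t within T)"
  shows "((\<lambda>t. fst (x t)) has_real_derivative fst v) (at t within T)"
    and "((\<lambda>t. fst (snd (x t))) has_real_derivative fst (snd v)) (at t within T)"
    and "((\<lambda>t. snd (snd (x t))) has_real_derivative snd (snd v)) (at t within T)"
proof -
  have bl: "bounded_linear (\<lambda>p::real \<times> real \<times> real. fst (snd p))" "bounded_linear (\<lambda>p::real \<times> real \<times> real. snd (snd p))"
    by (auto intro: bounded_linear_compose[OF bounded_linear_fst bounded_linear_snd]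
        bounded_linear_compose[OF bounded_linear_snd bounded_linear_snd])
  show "((\<lambda>t. fst (x t)) has_real_derivative fst v) (at t within T)"
    using bounded_linear.has_vector_derivative[OF bounded_linear_fst assms]
    by (simp add: has_real_derivative_iff_has_vector_derivative)
  show "((\<lambda>t. fst (snd (x t))) has_real_derivative fst (snd v)) (at t within T)"
    using bounded_linear.has_vector_derivative[OF bl(1) assms]
    by (simp add: has_real_derivative_iff_has_vector_derivative)
  show "((\<lambda>t. snd (snd (x t))) has_real_derivative snd (snd v)) (at t within T)"
    using bounded_linear.has_vector_derivative[OF bl(2) assms]
    by (simp add: has_real_derivative_iff_has_vector_derivative)
qed

definition Vf :: "real \<Rightarrow> real \<Rightarrow> real \<times> real \<times> real \<Rightarrow> real" where
  "Vf A B p = (fst p - 1)^2 + A * (snd (snd p))^2 + B * (fst (snd p))^2"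

definition Vdot :: "real \<Rightarrow> real \<Rightarrow> (real \<times> real \<times> real \<Rightarrow> real \<times> real \<times> real) \<Rightarrow> real \<times> real \<times> real \<Rightarrow> real" where
  "Vdot A B F p = 2 * (fst p - 1) * fst (F p) + 2 * A * snd (snd p) * snd (snd (F p)) + 2 * B * fst (snd p) * fst (snd (F p))"

lemma V_deriv:
  fixes x :: "real \<Rightarrow> real \<times> real \<times> real"
  assumes "(x has_vector_derivative F (x t)) (at t within T)"
  shows "((\<lambda>t. Vf A B (x t)) has_real_derivative Vdot A B F (x t)) (at t within T)"
proof -
  note d = comp_derivs[OF assms]
  show ?thesis unfolding Vf_def Vdot_def
    by (rule derivative_eq_intros d refl | simp)+ 
qed

lemma dist_sq: "(dist p (1::real, 0::real, 0::real))^2 = (fst p - 1)^2 + (fst (snd p))^2 + (snd (snd p))^2"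
  by (cases p) (simp add: dist_Pair_Pair dist_real_def power2_eq_square)

lemma sq_lt_imp_abs_le: "(u::real)^2 < d^2 \<Longrightarrow> d \<ge> 0 \<Longrightarrow> \<bar>u\<bar> \<le> d"
  by (metis abs_le_square_iff abs_of_nonneg less_imp_le)

lemma stab:
  fixes \<alpha> \<beta> \<gamma> \<eta> \<rho> :: real
  assumes p: "\<alpha> > 0" "\<beta> > 0" "\<gamma> > 0" "\<eta> > 0" "0 < \<rho>" "\<rho> < 1" and R0: "\<rho> * \<beta> / \<alpha> < 1"
  shows "locally_asymptotically_stable (swir_field \<alpha> \<beta> \<gamma> \<eta> \<rho>) (1, 0, 0)"
proof -
  define F where "F = swir_field \<alpha> \<beta> \<gamma> \<eta> \<rho>"
  define \<mu> where "\<mu> = \<alpha> - \<rho> * \<beta>"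
  have mu: "\<mu> > 0" using R0 p by (simp add: \<mu>_def field_simps)
  define A where "A = 4 * (\<eta> - \<gamma>)^2 / (\<gamma> * \<eta>) + 1"
  define B where "B = 2 * ((\<beta> + \<gamma>)^2 / \<gamma> + A * \<alpha>^2 / \<eta>) / \<mu> + 1"
  define c0 where "c0 = min (min \<gamma> \<eta>) \<mu> / 2"
  define \<delta>0 where "\<delta>0 = c0 / (6 * \<beta>)"
  have A1: "A \<ge> 1" using p by (simp add: A_def)
  have B1: "B \<ge> 1" using p mu A1 by (simp add: B_def)
  have c0pos: "c0 > 0" using p mu by (simp add: c0_def)
  have d0pos: "\<delta>0 > 0" using c0pos p by (simp add: \<delta>0_def)
  have Vge: "(dist q (1, 0, 0))^2 \<le> Vf A B q" for q
  proof -
    have "(snd (snd q))^2 \<le> A * (snd (snd q))^2" using A1 by (simp add: mult_le_cancel_right1)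
    moreover have "(fst (snd q))^2 \<le> B * (fst (snd q))^2" using B1 by (simp add: mult_le_cancel_right1)
    ultimately show ?thesis unfolding dist_sq Vf_def by linarith
  qed
  have Vle: "Vf A B q \<le> (1 + A + B) * (dist q (1, 0, 0))^2" for q
  proof -
    have "A * (snd (snd q))^2 \<le> (1 + A + B) * (snd (snd q))^2" using B1 by (intro mult_right_mono) auto
    moreover have "B * (fst (snd q))^2 \<le> (1 + A + B) * (fst (snd q))^2" using A1 by (intro mult_right_mono) auto
    moreover have "(fst q - 1)^2 \<le> (1 + A + B) * (fst q - 1)^2" using A1 B1 by (simp add: mult_le_cancel_right1)
    ultimately show ?thesis unfolding dist_sq Vf_def by (simp add: algebra_simps)
  qed
  have V0: "Vf A B q \<ge> 0" for q using Vge[of q] by (meson order_trans zero_le_power2)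
  have small: "\<bar>fst q - 1\<bar> \<le> \<delta>0 \<and> \<bar>fst (snd q)\<bar> \<le> \<delta>0 \<and> \<bar>snd (snd q)\<bar> \<le> \<delta>0" if "Vf A B q < \<delta>0^2" for q
  proof -
    have "(fst q - 1)^2 < \<delta>0^2" "(fst (snd q))^2 < \<delta>0^2" "(snd (snd q))^2 < \<delta>0^2"
      using Vge[of q] that zero_le_power2[of "fst q - 1"] zero_le_power2[of "fst (snd q)"] zero_le_power2[of "snd (snd q)"]
      unfolding dist_sq by linarith+
    then show ?thesis using d0pos by (auto intro: sq_lt_imp_abs_le)
  qed
  have decay: "Vdot A B F q \<le> - c0 * Vf A B q" if "Vf A B q < \<delta>0^2" for q
  proof -
    obtain S I R where q: "q = (S, I, R)" by (cases q) auto
    have b: "\<bar>S - 1\<bar> \<le> \<delta>0" "\<bar>I\<bar> \<le> \<delta>0" "\<bar>R\<bar> \<le> \<delta>0" using small[OF that] by (auto simp: q)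
    have "2 * (S - 1) * (- \<beta> * I * (1 + (S - 1)) + \<gamma> * (1 - (1 + (S - 1)) - I - R) + \<eta> * R)
       + 2 * A * R * (\<alpha> * I - \<eta> * R)
       + 2 * B * I * (\<rho> * \<beta> * I * (1 + (S - 1)) - \<alpha> * I + \<beta> * I * (1 - (1 + (S - 1)) - I - R))
       \<le> - c0 * ((S - 1)^2 + A * R^2 + B * I^2)"
      by (rule key_ineq[OF p \<mu>_def mu A_def B_def c0_def \<delta>0_def b])
    then show ?thesis by (simp add: q Vdot_def Vf_def F_def swir_field_def)
  qed
  have main: "Vf A B (x t) \<le> Vf A B (x 0) * exp (- c0 * t)"
    if sol: "ode_solution F x {0..b}" and init: "Vf A B (x 0) < \<delta>0^2" and t: "t \<in> {0..b}" for x b t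
  proof -
    have der: "((\<lambda>t. Vf A B (x t)) has_real_derivative Vdot A B F (x s)) (at s within {0..b})" if "s \<in> {0..b}" for s
      using sol that unfolding ode_solution_def by (intro V_deriv) auto
    have inside: "Vf A B (x s) < \<delta>0^2" if "s \<in> {0..b}" for s
    proof (rule barrier[where \<phi> = "\<lambda>t. Vf A B (x t)", OF der _ init that])
      fix s assume "s \<in> {0..b}" "Vf A B (x s) < \<delta>0^2"
      moreover have "c0 * Vf A B (x s) \<ge> 0" using V0[of "x s"] c0pos by simp
      ultimately show "Vdot A B F (x s) \<le> 0" using decay[of "x s"] by linarith
    qed auto
    have der2: "((\<lambda>t. exp (c0 * t) * Vf A B (x t)) has_real_derivative
        exp (c0 * s) * (c0 * Vf A B (x s) + Vdot A B F (x s))) (at s within {0..b})" if "s \<in> {0..b}" for s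
      using der[OF that] by (auto intro!: derivative_eq_intros simp: algebra_simps)
    have "exp (c0 * t) * Vf A B (x t) \<le> exp (c0 * 0) * Vf A B (x 0)"
    proof (rule deriv_nonpos_le[OF der2 _ t])
      fix s assume s: "s \<in> {0..b}"
      have "c0 * Vf A B (x s) + Vdot A B F (x s) \<le> 0" using decay[OF inside[OF s]] by simp
      then show "exp (c0 * s) * (c0 * Vf A B (x s) + Vdot A B F (x s)) \<le> 0"
        by (simp add: mult_nonneg_nonpos)
    qed auto
    then show ?thesis by (simp add: exp_minus field_simps)
  qed
  have Vx0: "Vf A B (x 0) < m" if "dist (x 0) (1, 0, 0) < sqrt (m / (1 + A + B))" "m > 0" for x :: "real \<Rightarrow> real \<times> real \<times> real" and m
  proof -
    have pos: "1 + A + B > 0" using A1 B1 by simp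
    have "(dist (x 0) (1, 0, 0))^2 < (sqrt (m / (1 + A + B)))^2"
      using that by (intro power_strict_mono) auto
    then have "(dist (x 0) (1, 0, 0))^2 < m / (1 + A + B)" using that pos by simp
    then have "(1 + A + B) * (dist (x 0) (1, 0, 0))^2 < m" using pos by (simp add: field_simps)
    then show ?thesis using Vle[of "x 0"] by linarith
  qed
  have eq: "equilibrium F (1, 0, 0)" by (simp add: equilibrium_def F_def swir_field_def zero_prod_def)
  have ls: "lyapunov_stable F (1, 0, 0)"
    unfolding lyapunov_stable_def
  proof (intro allI impI)
    fix \<epsilon> :: real assume e: "\<epsilon> > 0"
    define m where "m = min (\<delta>0^2) (\<epsilon>^2)"
    have m: "m > 0" using e d0pos by (simp add: m_def)
    show "\<exists>\<delta>>0. \<forall>x b. ode_solution F x {0..b} \<and> dist (x 0) (1, 0, 0) < \<delta> \<longrightarrow> (\<forall>t\<in>{0..b}. dist (x t) (1, 0, 0) < \<epsilon>)"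
    proof (intro exI[of _ "sqrt (m / (1 + A + B))"] conjI allI impI ballI)
      show "sqrt (m / (1 + A + B)) > 0" using m A1 B1 by simp
      fix x b t assume H: "ode_solution F x {0..b} \<and> dist (x 0) (1, 0, 0) < sqrt (m / (1 + A + B))" and t: "t \<in> {0..b}"
      have V: "Vf A B (x 0) < m" using Vx0 H m by blast
      then have "Vf A B (x 0) < \<delta>0^2" by (simp add: m_def)
      then have "Vf A B (x t) \<le> Vf A B (x 0) * exp (- c0 * t)" using main H t by blast
      also have "\<dots> \<le> Vf A B (x 0)" using V0[of "x 0"] t c0pos by (intro mult_left_le) auto
      finally have "(dist (x t) (1, 0, 0))^2 < \<epsilon>^2" using Vge[of "x t"] V by (simp add: m_def)
      then show "dist (x t) (1, 0, 0) < \<epsilon>" using e by (simp add: power_less_imp_less_base)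
    qed
  qed
  have att: "\<exists>\<delta>>0. \<forall>x. ode_solution F x {0..} \<and> dist (x 0) (1, 0, 0) < \<delta> \<longrightarrow> (x \<longlongrightarrow> (1, 0, 0)) at_top"
  proof (intro exI[of _ "sqrt (\<delta>0^2 / (1 + A + B))"] conjI allI impI)
    show "sqrt (\<delta>0^2 / (1 + A + B)) > 0" using d0pos A1 B1 by simp
    fix x assume H: "ode_solution F x {0..} \<and> dist (x 0) (1, 0, 0) < sqrt (\<delta>0^2 / (1 + A + B))"
    have V: "Vf A B (x 0) < \<delta>0^2" using Vx0[of x "\<delta>0^2"] H d0pos by simp
    have bound: "dist (x t) (1, 0, 0) \<le> sqrt (Vf A B (x 0) * exp (- c0 * t))" if t: "t \<ge> 0" for t
    proof -
      have "ode_solution F x {0..t}"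
        unfolding ode_solution_def
      proof
        fix s assume "s \<in> {0..t}"
        then have "(x has_vector_derivative F (x s)) (at s within {0..})" using H unfolding ode_solution_def by auto
        then show "(x has_vector_derivative F (x s)) (at s within {0..t})"
          by (rule has_vector_derivative_within_subset) auto
      qed
      then have "Vf A B (x t) \<le> Vf A B (x 0) * exp (- c0 * t)" using main V t by auto
      then have "(dist (x t) (1, 0, 0))^2 \<le> Vf A B (x 0) * exp (- c0 * t)" using Vge[of "x t"] by linarith
      then show ?thesis by (simp add: real_le_rsqrt)
    qed
    have lim: "((\<lambda>t. sqrt (Vf A B (x 0) * exp (- c0 * t))) \<longlongrightarrow> 0) at_top"
    proof -
      have "((\<lambda>t. exp (- c0 * t)) \<longlongrightarrow> 0) at_top" using c0pos by real_asymp
      then have "((\<lambda>t. Vf A B (x 0) * exp (- c0 * t)) \<longlongrightarrow> Vf A B (x 0) * 0) at_top"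
        by (intro tendsto_mult_left)
      then have "((\<lambda>t. sqrt (Vf A B (x 0) * exp (- c0 * t))) \<longlongrightarrow> sqrt (Vf A B (x 0) * 0)) at_top"
        by (intro tendsto_real_sqrt)
      then show ?thesis by simp
    qed
    have "((\<lambda>t. dist (x t) (1, 0, 0)) \<longlongrightarrow> 0) at_top"
    proof (rule tendsto_sandwich[OF _ _ tendsto_const lim])
      show "\<forall>\<^sub>F t in at_top. 0 \<le> dist (x t) (1, 0, 0)" by simp
      show "\<forall>\<^sub>F t in at_top. dist (x t) (1, 0, 0) \<le> sqrt (Vf A B (x 0) * exp (- c0 * t))"
        using eventually_ge_at_top[of "0::real"] by eventually_elim (rule bound)
    qed
    then show "(x \<longlongrightarrow> (1, 0, 0)) at_top" by (simp only: tendsto_dist_iff[symmetric])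
  qed
  show ?thesis unfolding locally_asymptotically_stable_def F_def[symmetric]
    using eq ls att by blast
qed

lemma growth:
  fixes S I R e \<alpha> \<beta> \<rho> \<kappa> :: real
  assumes "\<beta> > 0" "0 < \<rho>" "\<rho> < 1" "\<kappa> = \<rho> * \<beta> - \<alpha>" "\<kappa> > 0"
    and "\<bar>S - 1\<bar> \<le> e" "\<bar>I\<bar> \<le> e" "\<bar>R\<bar> \<le> e" "e \<le> \<kappa> / (6 * \<beta>)"
  shows "\<rho> * \<beta> * S - \<alpha> + \<beta> * (1 - S - I - R) \<ge> \<kappa> / 2"
proof -
  have be: "\<beta> * e \<le> \<kappa> / 6" using assms(1,9) by (simp add: field_simps)
  have "(\<rho> - 1) * (S - 1) \<ge> - e"
  proof -
    have "\<bar>(\<rho> - 1) * (S - 1)\<bar> \<le> 1 * \<bar>S - 1\<bar>" unfolding abs_mult using assms by (intro mult_right_mono) auto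
    then have "\<bar>(\<rho> - 1) * (S - 1)\<bar> \<le> e" using assms(6) by simp
    then have "- ((\<rho> - 1) * (S - 1)) \<le> e" by (rule abs_le_D2)
    then show ?thesis by simp
  qed
  then have h1: "\<beta> * ((\<rho> - 1) * (S - 1)) \<ge> \<beta> * (- e)" using assms by (intro mult_left_mono) auto
  have h2: "\<beta> * I \<le> \<beta> * e" "\<beta> * R \<le> \<beta> * e" using assms by (intro mult_left_mono; auto)+
  have eq: "\<rho> * \<beta> * S - \<alpha> + \<beta> * (1 - S - I - R) = \<kappa> + \<beta> * ((\<rho> - 1) * (S - 1)) - \<beta> * I - \<beta> * R"
    using assms(4) by (simp add: algebra_simps)
  show ?thesis unfolding eq using h1 h2 be by (simp add: algebra_simps)
qed

lemma clampF_eq: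
  assumes "dist q (1, 0, 0) \<le> 1"
  shows "clampF \<alpha> \<beta> \<gamma> \<eta> \<rho> q = swir_field \<alpha> \<beta> \<gamma> \<eta> \<rho> q"
proof -
  obtain S I R where q: "q = (S, I, R)" by (cases q) auto
  have "(dist q (1, 0, 0))^2 \<le> 1" using assms by (simp add: power_le_one)
  then have h: "(S - 1)^2 + I^2 + R^2 \<le> 1" unfolding dist_sq q by simp
  then have "(S - 1)^2 \<le> 1" "I^2 \<le> 1" "R^2 \<le> 1"
    using zero_le_power2[of "S - 1"] zero_le_power2[of I] zero_le_power2[of R] by linarith+
  then have "\<bar>S - 1\<bar> \<le> 1" "\<bar>I\<bar> \<le> 1" "\<bar>R\<bar> \<le> 1" by (simp_all add: abs_square_le_1)
  then have "clp S = S" "clp I = I" "clp R = R" by (auto simp: clp_def)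
  then show ?thesis by (simp add: q clampF_def)
qed

lemma comps_le_dist:
  fixes q :: "real \<times> real \<times> real"
  shows "\<bar>fst q - 1\<bar> \<le> dist q (1, 0, 0)" "\<bar>fst (snd q)\<bar> \<le> dist q (1, 0, 0)" "\<bar>snd (snd q)\<bar> \<le> dist q (1, 0, 0)"
proof -
  obtain S I R where q: "q = (S, I, R)" by (cases q) auto
  show "\<bar>fst q - 1\<bar> \<le> dist q (1, 0, 0)" "\<bar>fst (snd q)\<bar> \<le> dist q (1, 0, 0)" "\<bar>snd (snd q)\<bar> \<le> dist q (1, 0, 0)"
    using comp_le_dist3[where xa=S and xb=I and xc=R and ya=1 and yb=0 and yc=0] by (simp_all add: q)
qed

lemma unstab:
  fixes \<alpha> \<beta> \<gamma> \<eta> \<rho> :: real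
  assumes p: "\<alpha> > 0" "\<beta> > 0" "\<gamma> > 0" "\<eta> > 0" "0 < \<rho>" "\<rho> < 1" and R0: "\<rho> * \<beta> / \<alpha> > 1"
  shows "unstable_equilibrium (swir_field \<alpha> \<beta> \<gamma> \<eta> \<rho>) (1, 0, 0)"
proof -
  define F where "F = swir_field \<alpha> \<beta> \<gamma> \<eta> \<rho>"
  define G where "G = clampF \<alpha> \<beta> \<gamma> \<eta> \<rho>"
  define \<kappa> where "\<kappa> = \<rho> * \<beta> - \<alpha>"
  have kap: "\<kappa> > 0" using R0 p by (simp add: \<kappa>_def field_simps)
  define \<epsilon>0 where "\<epsilon>0 = min (1/2) (\<kappa> / (6 * \<beta>))"
  have e0: "\<epsilon>0 > 0" "\<epsilon>0 \<le> 1/2" "\<epsilon>0 \<le> \<kappa> / (6 * \<beta>)" using kap p by (auto simp: \<epsilon>0_def)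
  define pp where "pp = (1::real, 0::real, 0::real)"
  have eq: "equilibrium F pp" by (simp add: equilibrium_def F_def swir_field_def zero_prod_def pp_def)
  have GF: "G q = F q" if "dist q pp \<le> \<epsilon>0" for q
    unfolding G_def F_def pp_def by (rule clampF_eq) (use that e0 in \<open>auto simp: pp_def\<close>)
  have Ilip: "dist (G x) (G y) \<le> (54 * (\<alpha> + \<beta> + \<gamma> + \<eta>)) * dist x y" for x y
    unfolding G_def using p by (intro clampF_lip) auto
  have key: "\<exists>x b. ode_solution F x {0..b} \<and> dist (x 0) pp < \<delta> \<and> (\<exists>t\<in>{0..b}. \<not> dist (x t) pp < \<epsilon>0)"
    if d: "\<delta> > 0" for \<delta>
  proof -
    define I0 where "I0 = min (\<delta>/2) (\<epsilon>0/2)"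
    have I0: "I0 > 0" "I0 < \<delta>" "I0 < \<epsilon>0" using d e0 by (auto simp: I0_def)
    define T where "T = 2 * \<epsilon>0 / (\<kappa> * I0)"
    have T0: "T \<ge> 0" using e0 kap I0 by (simp add: T_def)
    have TI: "\<kappa> / 2 * I0 * T = \<epsilon>0" using kap I0 by (simp add: T_def field_simps)
    obtain y where y0: "y 0 = (1, I0, 0)" and ysol: "\<forall>t\<in>{0..T}. (y has_vector_derivative G (y t)) (at t within {0..T})"
      using ode_exists[OF Ilip _ T0, of "(1, I0, 0)"] p by auto
    have dy0: "dist (y 0) pp = I0" using I0 by (simp add: y0 pp_def dist_Pair_Pair dist_real_def)
    have exits: "\<exists>t\<in>{0..T}. \<epsilon>0 \<le> dist (y t) pp"
    proof (rule ccontr)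
      assume "\<not> ?thesis"
      then have inb: "dist (y t) pp < \<epsilon>0" if "t \<in> {0..T}" for t using that by (force simp: not_le)
      define Iy where "Iy t = fst (snd (y t))" for t
      define g where "g t = \<rho> * \<beta> * fst (y t) - \<alpha> + \<beta> * (1 - fst (y t) - Iy t - snd (snd (y t)))" for t
      have gk: "g t \<ge> \<kappa> / 2" if "t \<in> {0..T}" for t
        unfolding g_def Iy_def
        by (rule growth[OF p(2) p(5) p(6) \<kappa>_def kap _ _ _ e0(3)])
           (use comps_le_dist[of "y t"] inb[OF that] in \<open>auto simp: pp_def\<close>)
      have Ider: "(Iy has_real_derivative Iy t * g t) (at t within {0..T})" if t: "t \<in> {0..T}" for t
      proof -
        have "(y has_vector_derivative G (y t)) (at t within {0..T})"
          using ysol t by auto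
        then have "(y has_vector_derivative F (y t)) (at t within {0..T})"
          using GF[of "y t"] inb[OF t] by simp
        from comp_derivs(2)[OF this] show ?thesis
          unfolding Iy_def g_def F_def swir_field_def
          by (cases "y t") (simp add: algebra_simps)
      qed
      have Ipos: "0 < Iy t" if "t \<in> {0..T}" for t
      proof -
        have "- Iy t < 0"
        proof (rule barrier[where \<phi> = "\<lambda>t. - Iy t" and \<phi>' = "\<lambda>t. - (Iy t * g t)", OF _ _ _ that])
          show "((\<lambda>t. - Iy t) has_real_derivative - (Iy t * g t)) (at t within {0..T})" if "t \<in> {0..T}" for t
            using Ider[OF that] by (auto intro: derivative_eq_intros)
          show "- (Iy t * g t) \<le> 0" if "t \<in> {0..T}" "- Iy t < 0" for t
            using gk[OF that(1)] kap that(2) by (simp add: mult_pos_pos)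
          show "- Iy 0 < 0" using I0 by (simp add: Iy_def y0)
        qed
        then show ?thesis by simp
      qed
      have Ige: "Iy t \<ge> I0" if "t \<in> {0..T}" for t
      proof -
        have "- Iy t \<le> - Iy 0"
        proof (rule deriv_nonpos_le[where \<phi> = "\<lambda>t. - Iy t" and \<phi>' = "\<lambda>t. - (Iy t * g t)", OF _ _ that])
          show "((\<lambda>t. - Iy t) has_real_derivative - (Iy t * g t)) (at t within {0..T})" if "t \<in> {0..T}" for t
            using Ider[OF that] by (auto intro: derivative_eq_intros)
          show "- (Iy t * g t) \<le> 0" if "t \<in> {0..T}" for t
            using gk[OF that] kap Ipos[OF that] by (simp add: mult_pos_pos)
        qed
        then show ?thesis by (simp add: Iy_def y0)
      qed
      have "I0 + \<kappa> / 2 * I0 * T - Iy T \<le> I0 + \<kappa> / 2 * I0 * 0 - Iy 0"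
      proof (rule deriv_nonpos_le[where \<phi> = "\<lambda>t. I0 + \<kappa> / 2 * I0 * t - Iy t" and \<phi>' = "\<lambda>t. \<kappa> / 2 * I0 - Iy t * g t"])
        show "((\<lambda>t. I0 + \<kappa> / 2 * I0 * t - Iy t) has_real_derivative \<kappa> / 2 * I0 - Iy t * g t) (at t within {0..T})"
          if "t \<in> {0..T}" for t
          using Ider[OF that] by (auto intro!: derivative_eq_intros)
        show "\<kappa> / 2 * I0 - Iy t * g t \<le> 0" if "t \<in> {0..T}" for t
        proof -
          have "I0 * (\<kappa> / 2) \<le> Iy t * g t"
            using Ige[OF that] gk[OF that] I0 kap by (intro mult_mono) auto
          then show ?thesis by (simp add: mult.commute)
        qed
        show "T \<in> {0..T}" using T0 by simp
      qed
      then have "Iy T \<ge> I0 + \<epsilon>0" using TI by (simp add: Iy_def y0)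
      moreover have "\<bar>Iy T\<bar> < \<epsilon>0" using comps_le_dist(2)[of "y T"] inb[of T] T0 by (simp add: Iy_def pp_def)
      ultimately show False using I0 by linarith
    qed
    have ycont: "continuous_on {0..T} y"
      unfolding continuous_on_eq_continuous_within using ysol by (auto intro: has_vector_derivative_continuous)
    define C where "C = {0..T} \<inter> (\<lambda>t. dist (y t) pp) -` {\<epsilon>0..}"
    have "closed C" unfolding C_def
      by (rule continuous_closed_preimage) (use ycont in \<open>auto intro!: continuous_intros\<close>)
    have Cne: "C \<noteq> {}" using exits by (auto simp: C_def)
    have bdd: "bdd_below C" by (auto simp: C_def bdd_below_def)
    define t1 where "t1 = Inf C"
    have t1C: "t1 \<in> C" unfolding t1_def using closed_contains_Inf[OF Cne bdd \<open>closed C\<close>] .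
    then have t1: "0 \<le> t1" "t1 \<le> T" "\<epsilon>0 \<le> dist (y t1) pp" by (auto simp: C_def)
    have before: "dist (y s) pp < \<epsilon>0" if "0 \<le> s" "s < t1" for s
    proof (rule ccontr)
      assume "\<not> dist (y s) pp < \<epsilon>0"
      then have "s \<in> C" using that t1 by (auto simp: C_def)
      then have "t1 \<le> s" unfolding t1_def using bdd by (rule cInf_lower)
      then show False using that by simp
    qed
    define D where "D = {0..T} \<inter> (\<lambda>t. dist (y t) pp) -` {..\<epsilon>0}"
    have "closed D" unfolding D_def
      by (rule continuous_closed_preimage) (use ycont in \<open>auto intro!: continuous_intros\<close>)
    have upto: "dist (y s) pp \<le> \<epsilon>0" if "s \<in> {0..t1}" for s
    proof (cases "s < t1")
      case True then show ?thesis using before that by (auto intro: less_imp_le)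
    next
      case False
      then have st: "s = t1" using that by simp
      show ?thesis
      proof (cases "t1 = 0")
        case True then show ?thesis using st dy0 I0 by simp
      next
        case False
        then have "0 < t1" using t1 by simp
        have "{0..<t1} \<subseteq> D" using before t1 by (auto simp: D_def less_imp_le)
        then have "closure {0..<t1} \<subseteq> D" using \<open>closed D\<close> by (rule closure_minimal)
        then have "t1 \<in> D" using \<open>0 < t1\<close> by (simp add: closure_atLeastLessThan subset_iff)
        then show ?thesis using st by (simp add: D_def)
      qed
    qed
    have "ode_solution F y {0..t1}"
      unfolding ode_solution_def
    proof
      fix s assume s: "s \<in> {0..t1}"
      then have "(y has_vector_derivative G (y s)) (at s within {0..T})" using ysol t1 by auto
      then have "(y has_vector_derivative G (y s)) (at s within {0..t1})"
        by (rule has_vector_derivative_within_subset) (use t1 in auto)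
      then show "(y has_vector_derivative F (y s)) (at s within {0..t1})"
        using GF[OF upto[OF s]] by simp
    qed
    moreover have "\<exists>t\<in>{0..t1}. \<not> dist (y t) pp < \<epsilon>0"
      using t1 by (intro bexI[of _ t1]) auto
    ultimately show ?thesis
      using dy0 I0 by (intro exI[of _ y] exI[of _ t1]) auto
  qed
  have "\<not> lyapunov_stable F pp"
    unfolding lyapunov_stable_def using e0(1) key by (auto simp: not_less) (metis not_less)
  then show ?thesis using eq unfolding unstable_equilibrium_def F_def pp_def by simp
qed

lemma part_a:
  fixes \<alpha> \<beta> \<gamma> \<eta> \<rho> :: real
  assumes "\<gamma> > 0" "\<eta> > 0"
  shows "{p. equilibrium (swir_field \<alpha> \<beta> \<gamma> \<eta> \<rho>) p \<and> fst (snd p) = 0} = {(1, 0, 0)}"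
proof (intro set_eqI iffI)
  fix p :: "real \<times> real \<times> real"
  assume "p \<in> {p. equilibrium (swir_field \<alpha> \<beta> \<gamma> \<eta> \<rho>) p \<and> fst (snd p) = 0}"
  moreover obtain S I R where p: "p = (S, I, R)" by (cases p) auto
  ultimately have I: "I = 0" and e: "\<gamma> * (1 - S - R) + \<eta> * R = 0" "\<eta> * R = 0"
    by (auto simp: equilibrium_def swir_field_def zero_prod_def)
  then have "R = 0" using assms by simp
  then have "S = 1" using e assms by simp
  then show "p \<in> {(1, 0, 0)}" using I \<open>R = 0\<close> p by simp
next
  fix p :: "real \<times> real \<times> real"
  assume "p \<in> {(1, 0, 0)}"
  then show "p \<in> {p. equilibrium (swir_field \<alpha> \<beta> \<gamma> \<eta> \<rho>) p \<and> fst (snd p) = 0}"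
    by (simp add: equilibrium_def swir_field_def zero_prod_def)
qed

theorem theorem1:
  fixes \<alpha> \<beta> \<gamma> \<eta> \<rho> :: real
  assumes "\<alpha> > 0" "\<beta> > 0" "\<gamma> > 0" "\<eta> > 0" "0 < \<rho>" "\<rho> < 1" "\<gamma> \<ge> \<alpha>"
  shows "{p. equilibrium (swir_field \<alpha> \<beta> \<gamma> \<eta> \<rho>) p \<and> fst (snd p) = 0} = {(1, 0, 0)}
         \<and> (\<rho> * \<beta> / \<alpha> < 1 \<longrightarrow> locally_asymptotically_stable (swir_field \<alpha> \<beta> \<gamma> \<eta> \<rho>) (1, 0, 0))
         \<and> (\<rho> * \<beta> / \<alpha> > 1 \<longrightarrow> unstable_equilibrium (swir_field \<alpha> \<beta> \<gamma> \<eta> \<rho>) (1, 0, 0))"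
  using part_a[of \<gamma> \<eta> \<alpha> \<beta> \<rho>] stab[of \<alpha> \<beta> \<gamma> \<eta> \<rho>] unstab[of \<alpha> \<beta> \<gamma> \<eta> \<rho>] assms by blast

end
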